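(* Consider a unitary multi-parameter channel $\rho_0\mapsto U(\theta)\rho_0U(\theta)^\dagger$ on $\mathbb{C}^d$, $\theta=(\theta^1,\dots,\theta^m)\in\mathbb{R}^m$, with $U(\theta)$ unitary and differentiable, and fixed pure input $\rho_0=|\psi_0\rangle\langle\psi_0|$. Let $H(\theta)$ be the SLD quantum information matrix of $\rho_{out}(\theta)=U(\theta)\rho_0U(\theta)^\dagger$ and $C_\Upsilon(\theta)_{jk}=4\,\mathrm{Re}\,\mathrm{tr}\{\frac{\partial U}{\partial\theta^j}\rho_0\frac{\partial U}{\partial\theta^k}^\dagger\}$. Then $H(\theta)=C_\Upsilon(\theta)$ if and only if $\mathrm{tr}\{U(\theta)\rho_0\frac{\partial U(\theta)}{\partial\theta^l}^\dagger\}=0$ for all $l$.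
   Context: The SLD quantum information matrix of a family $\rho(\theta)$ is $H(\theta)_{jk}=\mathrm{Re}\,\mathrm{tr}\{\lambda^{(j)}\rho\lambda^{(k)}\}$, where $\lambda^{(j)}$ is a self-adjoint solution of $\partial\rho/\partial\theta^j=\frac12(\rho\lambda^{(j)}+\lambda^{(j)}\rho)$. For a unitary channel the canonical Kraus representation is the single operator $U(\theta)$, and $C_\Upsilon$ is the corresponding multi-parameter Sarovar–Milburn bound. *)

theory Defs
  imports "HOL-Analysis.Analysis"
begin

text \<open>d x d complex matrices are represented as complex^'d^'d (d = CARD('d));
parameters theta in R^m as real^'m (m = CARD('m)).\<close>

definition mtrace :: "complex^'d^'d \<Rightarrow> complex" where
  "mtrace A = (\<Sum>i\<in>UNIV. A $ i $ i)"

definition cadj :: "complex^'d^'d \<Rightarrow> complex^'d^'d" where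
  "cadj A = (\<chi> i j. cnj (A $ j $ i))"

definition unitary_mat :: "complex^'d^'d \<Rightarrow> bool" where
  "unitary_mat U \<longleftrightarrow> U ** cadj U = mat 1 \<and> cadj U ** U = mat 1"

definition self_adjoint :: "complex^'d^'d \<Rightarrow> bool" where
  "self_adjoint A \<longleftrightarrow> cadj A = A"

definition proj :: "complex^'d \<Rightarrow> complex^'d^'d" where
  "proj \<psi> = (\<chi> i j. \<psi> $ i * cnj (\<psi> $ j))"

definition partial_deriv :: "(real^'m \<Rightarrow> 'a::real_normed_vector) \<Rightarrow> real^'m \<Rightarrow> 'm \<Rightarrow> 'a" where
  "partial_deriv f \<theta> j = vector_derivative (\<lambda>t. f (\<theta> + t *\<^sub>R axis j 1)) (at 0)"

definition is_SLD_family ::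
  "(real^'m \<Rightarrow> complex^'d^'d) \<Rightarrow> real^'m \<Rightarrow> ('m \<Rightarrow> complex^'d^'d) \<Rightarrow> bool" where
  "is_SLD_family \<rho> \<theta> L \<longleftrightarrow>
     (\<forall>j. self_adjoint (L j) \<and>
          partial_deriv \<rho> \<theta> j = (1/2::real) *\<^sub>R (\<rho> \<theta> ** L j + L j ** \<rho> \<theta>))"

definition SLD_info_matrix ::
  "(real^'m \<Rightarrow> complex^'d^'d) \<Rightarrow> real^'m \<Rightarrow> 'm \<Rightarrow> 'm \<Rightarrow> real" where
  "SLD_info_matrix \<rho> \<theta> = (SOME H. \<exists>L. is_SLD_family \<rho> \<theta> L \<and>
      H = (\<lambda>j k. Re (mtrace (L j ** \<rho> \<theta> ** L k))))"

definition C_Upsilon ::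
  "(real^'m \<Rightarrow> complex^'d^'d) \<Rightarrow> complex^'d^'d \<Rightarrow> real^'m \<Rightarrow> 'm \<Rightarrow> 'm \<Rightarrow> real" where
  "C_Upsilon U \<rho>0 \<theta> j k =
     4 * Re (mtrace (partial_deriv U \<theta> j ** \<rho>0 ** cadj (partial_deriv U \<theta> k)))"

end

theory Submission
  imports Defs
begin

definition ip :: "complex^'d \<Rightarrow> complex^'d \<Rightarrow> complex" where
  "ip x y = (\<Sum>i\<in>UNIV. x$i * cnj (y$i))"
definition outer :: "complex^'d \<Rightarrow> complex^'d \<Rightarrow> complex^'d^'d" where
  "outer x y = (\<chi> i j. x$i * cnj (y$j))"

lemma mm_bilinear: "bilinear ((**) :: complex^'d^'d \<Rightarrow> complex^'d^'d \<Rightarrow> complex^'d^'d)"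
  unfolding bilinear_def
proof (intro allI conjI linearI)
  fix A B C :: "complex^'d^'d" and r :: real
  show "A ** (B + C) = A ** B + A ** C" by (rule matrix_add_ldistrib)
  show "(B + C) ** A = B ** A + C ** A"
    by (simp add: vec_eq_iff matrix_matrix_mult_def sum.distrib distrib_right)
  show "A ** (r *\<^sub>R B) = r *\<^sub>R (A ** B)"
    by (simp add: vec_eq_iff matrix_matrix_mult_def scaleR_sum_right mult_scaleR_right mult_scaleR_left)
  show "(r *\<^sub>R B) ** A = r *\<^sub>R (B ** A)"
    by (simp add: vec_eq_iff matrix_matrix_mult_def scaleR_sum_right mult_scaleR_right mult_scaleR_left)
qed

lemma mm_bb: "bounded_bilinear ((**) :: complex^'d^'d \<Rightarrow> complex^'d^'d \<Rightarrow> complex^'d^'d)"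
  using mm_bilinear bilinear_conv_bounded_bilinear by blast

lemma cadj_linear: "bounded_linear (cadj :: complex^'d^'d \<Rightarrow> complex^'d^'d)"
proof -
  have "linear (cadj :: complex^'d^'d \<Rightarrow> complex^'d^'d)"
    by (intro linearI) (simp_all add: vec_eq_iff cadj_def)
  then show ?thesis using linear_conv_bounded_linear by blast
qed

lemma outer_mult: "outer x y ** outer z w = outer (ip z y *s x) w"
  by (simp add: vec_eq_iff matrix_matrix_mult_def outer_def ip_def sum_distrib_left sum_distrib_right mult_ac)

lemma mult_outer: "A ** outer x y = outer (A *v x) y"
  by (simp add: vec_eq_iff matrix_matrix_mult_def outer_def matrix_vector_mult_def sum_distrib_left mult_ac)

lemma outer_mult_cadj: "outer x y ** cadj B = outer x (B *v y)"
  by (simp add: vec_eq_iff matrix_matrix_mult_def outer_def matrix_vector_mult_def cadj_def sum_distrib_left mult_ac)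

lemma trace_outer: "mtrace (outer x y) = ip x y"
  by (simp add: mtrace_def outer_def ip_def)

lemma proj_outer: "proj x = outer x x"
  by (simp add: proj_def outer_def)

lemma ip_scale: "ip (c *s x) y = c * ip x y"
  by (simp add: ip_def sum_distrib_left mult_ac)

lemma ip_add: "ip (x + z) y = ip x y + ip z y"
  by (simp add: ip_def sum.distrib distrib_right)

lemma ip_cnj: "cnj (ip x y) = ip y x"
  by (simp add: ip_def mult_ac)

lemma ip_mv: "ip x (A *v y) = ip (cadj A *v x) y"
proof -
  have "ip x (A *v y) = (\<Sum>i\<in>UNIV. \<Sum>j\<in>UNIV. x$i * cnj (A$i$j) * cnj (y$j))"
    by (simp add: ip_def matrix_vector_mult_def sum_distrib_left mult_ac)
  also have "\<dots> = (\<Sum>j\<in>UNIV. \<Sum>i\<in>UNIV. x$i * cnj (A$i$j) * cnj (y$j))"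
    by (rule sum.swap)
  also have "\<dots> = ip (cadj A *v x) y"
    by (simp add: ip_def matrix_vector_mult_def cadj_def sum_distrib_left mult_ac)
  finally show ?thesis .
qed

lemma mtrace_add: "mtrace (A + B) = mtrace A + mtrace B"
  by (simp add: mtrace_def sum.distrib)

lemma mtrace_scaleR: "mtrace (r *\<^sub>R A) = r *\<^sub>R mtrace A"
  by (simp add: mtrace_def scaleR_sum_right)

lemma mtrace_comm: "mtrace (A ** B) = mtrace (B ** A)"
  unfolding mtrace_def using trace_mul_sym[of A B] by (simp add: trace_def)

lemma outer_add_left: "outer (x + z) y = outer x y + outer z y"
  by (simp add: vec_eq_iff outer_def distrib_right)
lemma outer_add_right: "outer x (y + z) = outer x y + outer x z"
  by (simp add: vec_eq_iff outer_def distrib_left)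

lemma cadj_outer: "cadj (outer x y) = outer y x"
  by (simp add: vec_eq_iff outer_def cadj_def)
lemma cadj_add: "cadj (A + B) = cadj A + cadj B"
  by (simp add: vec_eq_iff cadj_def)
lemma cadj_cadj: "cadj (cadj A) = A"
  by (simp add: vec_eq_iff cadj_def)
lemma cadj_mult: "cadj (A ** B) = cadj B ** cadj A"
  by (simp add: vec_eq_iff cadj_def matrix_matrix_mult_def mult_ac)

lemma ip_self: "ip x x = of_real ((norm x)^2)"
  proof -
  have "\<And>z::complex. z * cnj z = of_real (z \<bullet> z)"
    by (metis complex_norm_square power2_norm_eq_inner)
  then show ?thesis by (simp add: ip_def power2_norm_eq_inner inner_vec_def)
qed


lemma ip_add_right: "ip x (y + z) = ip x y + ip x z"
  by (simp add: ip_def sum.distrib distrib_left)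

lemma half_zero: "(x::complex^'d^'d) + x = 0 \<Longrightarrow> x = 0"
proof -
  assume "x + x = 0"
  then have "2 *\<^sub>R x = 0" by (simp add: scaleR_2)
  then show "x = 0" by simp
qed

lemma annihil:
  fixes r K :: "complex^'d^'d"
  assumes rr: "r ** r = r" and h: "r ** K + K ** r = 0"
  shows "r ** K = 0 \<and> K ** r = 0"
proof -
  interpret mm: bounded_bilinear "(**) :: complex^'d^'d \<Rightarrow> complex^'d^'d \<Rightarrow> complex^'d^'d"
    by (rule mm_bb)
  have 1: "r ** K + r ** K ** r = 0"
  proof -
    have "r ** (r ** K + K ** r) = 0" using h by simp
    then show ?thesis by (simp add: mm.add_right matrix_mul_assoc rr)
  qed
  have 2: "r ** K ** r + K ** r = 0"
  proof -
    have "(r ** K + K ** r) ** r = 0" using h by simp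
    then show ?thesis by (simp add: mm.add_left matrix_mul_assoc[symmetric] rr)
  qed
  have "r ** K = K ** r" using 1 2 by (metis add.commute add_left_imp_eq)
  then have "r ** K + r ** K = 0" using h by simp
  then have "r ** K = 0" by (rule half_zero)
  then show ?thesis using \<open>r ** K = K ** r\<close> by simp
qed

lemma sld_unique:
  fixes r A B A' B' :: "complex^'d^'d"
  assumes rr: "r ** r = r" and hA: "r ** A' + A' ** r = r ** A + A ** r"
    and hB: "r ** B' + B' ** r = r ** B + B ** r"
  shows "A' ** r ** B' = A ** r ** B"
proof -
  interpret mm: bounded_bilinear "(**) :: complex^'d^'d \<Rightarrow> complex^'d^'d \<Rightarrow> complex^'d^'d"
    by (rule mm_bb)
  have kA: "r ** (A' - A) + (A' - A) ** r = 0" using hA by (simp add: mm.diff_left mm.diff_right algebra_simps)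
  have kB: "r ** (B' - B) + (B' - B) ** r = 0" using hB by (simp add: mm.diff_left mm.diff_right algebra_simps)
  from annihil[OF rr kA] have a2: "(A' - A) ** r = 0" by simp
  from annihil[OF rr kB] have b1: "r ** (B' - B) = 0" by simp
  have e1: "A' ** r = A ** r" using a2 by (simp add: mm.diff_left)
  have e2: "r ** B' = r ** B" using b1 by (simp add: mm.diff_right)
  have "A' ** r ** B' = A ** r ** B'" by (simp only: e1)
  also have "\<dots> = A ** (r ** B')" by (simp only: matrix_mul_assoc)
  also have "\<dots> = A ** (r ** B)" by (simp only: e2)
  also have "\<dots> = A ** r ** B" by (simp only: matrix_mul_assoc)
  finally show ?thesis .
qed

lemma pd_has:
  fixes f :: "real^'m \<Rightarrow> 'a::real_normed_vector"
  assumes "f differentiable (at \<theta>)"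
  shows "((\<lambda>t. f (\<theta> + t *\<^sub>R axis j 1)) has_vector_derivative partial_deriv f \<theta> j) (at 0)"
proof -
  obtain f' where f': "(f has_derivative f') (at \<theta>)" using assms unfolding differentiable_def by blast
  have g: "((\<lambda>t::real. \<theta> + t *\<^sub>R axis j 1) has_derivative (\<lambda>t. t *\<^sub>R axis j 1)) (at 0)"
    by (auto intro!: derivative_eq_intros)
  have f'': "(f has_derivative f') (at ((\<lambda>t::real. \<theta> + t *\<^sub>R axis j 1) 0))" using f' by simp
  have "((f \<circ> (\<lambda>t::real. \<theta> + t *\<^sub>R axis j 1)) has_derivative (f' \<circ> (\<lambda>t. t *\<^sub>R axis j 1))) (at 0)"
    by (rule diff_chain_at[OF g f''])
  moreover have "f' \<circ> (\<lambda>t. t *\<^sub>R axis j 1) = (\<lambda>t. t *\<^sub>R f' (axis j 1))"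
    using has_derivative_linear[OF f'] by (simp add: o_def linear_cmul)
  ultimately have h: "((\<lambda>t. f (\<theta> + t *\<^sub>R axis j 1)) has_vector_derivative f' (axis j 1)) (at 0)"
    by (simp add: has_vector_derivative_def o_def)
  then have "partial_deriv f \<theta> j = f' (axis j 1)"
    unfolding partial_deriv_def by (rule vector_derivative_at)
  with h show ?thesis by simp
qed


lemma ip_neg: "ip (- x) y = - ip x y"
  by (simp add: ip_def sum_negf)

lemma outer_neg: "outer (- x) y = - outer x y"
  by (simp add: vec_eq_iff outer_def)

theorem lemma10:
  fixes U :: "real^'m \<Rightarrow> complex^'d^'d"
    and \<psi>0 :: "complex^'d"
    and \<theta> :: "real^'m"
  assumes unitary: "\<And>\<theta>. unitary_mat (U \<theta>)"
    and diff: "\<And>\<theta>. U differentiable (at \<theta>)"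
    and pure: "norm \<psi>0 = 1"
  shows "SLD_info_matrix (\<lambda>\<theta>. U \<theta> ** proj \<psi>0 ** cadj (U \<theta>)) \<theta> = C_Upsilon U (proj \<psi>0) \<theta>
     \<longleftrightarrow> (\<forall>l. mtrace (U \<theta> ** proj \<psi>0 ** cadj (partial_deriv U \<theta> l)) = 0)"
proof -
  interpret mm: bounded_bilinear "(**) :: complex^'d^'d \<Rightarrow> complex^'d^'d \<Rightarrow> complex^'d^'d"
    by (rule mm_bb)
  interpret cj: bounded_linear "cadj :: complex^'d^'d \<Rightarrow> complex^'d^'d"
    by (rule cadj_linear)
  define P where "P = proj \<psi>0"
  define \<rho> where "\<rho> = (\<lambda>\<theta>. U \<theta> ** P ** cadj (U \<theta>))"
  define D where "D = partial_deriv U \<theta>"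
  define \<psi> where "\<psi> = U \<theta> *v \<psi>0"
  define \<phi> where "\<phi> = (\<lambda>j. D j *v \<psi>0)"
  define b where "b = (\<lambda>j. ip \<psi> (\<phi> j))"
  define R where "R = (\<lambda>j. outer \<psi> (\<phi> j) + outer (\<phi> j) \<psi>)"
  have bdef: "\<And>j. ip \<psi> (\<phi> j) = b j" by (simp add: b_def)
  have uu: "cadj (U \<theta>) ** U \<theta> = mat 1" and uu2: "U \<theta> ** cadj (U \<theta>) = mat 1"
    using unitary[of \<theta>] unitary_mat_def by auto
  have hasD: "\<And>j. ((\<lambda>t. U (\<theta> + t *\<^sub>R axis j 1)) has_vector_derivative D j) (at 0)"
    unfolding D_def by (rule pd_has[OF diff])
  have anti: "cadj (U \<theta>) ** D j + cadj (D j) ** U \<theta> = 0" for j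
  proof -
    let ?u = "\<lambda>t. U (\<theta> + t *\<^sub>R axis j 1)"
    have "((\<lambda>t. cadj (?u t) ** ?u t) has_vector_derivative (cadj (?u 0) ** D j + cadj (D j) ** ?u 0)) (at 0)"
      by (rule mm.has_vector_derivative[OF cj.has_vector_derivative[OF hasD] hasD])
    moreover have "(\<lambda>t. cadj (?u t) ** ?u t) = (\<lambda>t. mat 1)" using unitary unitary_mat_def by auto
    ultimately have X: "((\<lambda>t. mat 1) has_vector_derivative (cadj (U \<theta>) ** D j + cadj (D j) ** U \<theta>)) (at 0)"
      by simp
    have v1: "vector_derivative (\<lambda>t::real. mat 1 :: complex^'d^'d) (at 0) = cadj (U \<theta>) ** D j + cadj (D j) ** U \<theta>"
      by (rule vector_derivative_at[OF X])
    have v2: "vector_derivative (\<lambda>t::real. mat 1 :: complex^'d^'d) (at 0) = 0"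
      by (rule vector_derivative_at) simp
    show ?thesis using v1 v2 by simp
  qed
  have ipnorm: "ip \<psi>0 \<psi>0 = 1" using ip_self[of \<psi>0] pure by simp
  have ippsi: "ip \<psi> \<psi> = 1"
  proof -
    have "ip \<psi> \<psi> = ip \<psi>0 (cadj (U \<theta>) *v \<psi>)" using ip_mv[of \<psi>0 "cadj (U \<theta>)" \<psi>] by (simp add: cadj_cadj \<psi>_def)
    also have "\<dots> = ip \<psi>0 \<psi>0" by (simp add: \<psi>_def matrix_vector_mul_assoc uu)
    finally show ?thesis using ipnorm by simp
  qed
  have bcnj: "ip (\<phi> j) \<psi> = - b j" for j
  proof -
    have "0 = ip \<psi>0 ((cadj (U \<theta>) ** D j + cadj (D j) ** U \<theta>) *v \<psi>0)" using anti by (simp add: ip_def)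
    also have "\<dots> = ip \<psi>0 (cadj (U \<theta>) *v \<phi> j) + ip \<psi>0 (cadj (D j) *v \<psi>)"
      by (simp add: matrix_vector_mult_add_rdistrib ip_add_right matrix_vector_mul_assoc[symmetric] \<phi>_def \<psi>_def)
    also have "\<dots> = b j + ip (\<phi> j) \<psi>"
      by (simp add: ip_mv cadj_cadj b_def \<phi>_def \<psi>_def)
    finally show ?thesis by (simp add: eq_neg_iff_add_eq_0 add.commute)
  qed
  have reb: "Re (b j) = 0" for j
  proof -
    have "cnj (b j) = - b j" using bcnj[of j] ip_cnj[of \<psi> "\<phi> j"] by (simp add: b_def)
    then have "Re (cnj (b j)) = Re (- b j)" by simp
    then show ?thesis by simp
  qed
  have rho: "\<rho> \<theta> = outer \<psi> \<psi>"
    by (simp add: \<rho>_def P_def proj_outer mult_outer outer_mult_cadj \<psi>_def)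
  have rr: "\<rho> \<theta> ** \<rho> \<theta> = \<rho> \<theta>" by (simp add: rho outer_mult ippsi)
  have pdrho: "partial_deriv \<rho> \<theta> j = R j" for j
  proof -
    let ?u = "\<lambda>t. U (\<theta> + t *\<^sub>R axis j 1)"
    have "((\<lambda>t. ?u t ** P ** cadj (?u t)) has_vector_derivative
        (?u 0 ** P ** cadj (D j) + (?u 0 ** 0 + D j ** P) ** cadj (?u 0))) (at 0)"
      by (rule mm.has_vector_derivative[OF mm.has_vector_derivative[OF hasD has_vector_derivative_const] cj.has_vector_derivative[OF hasD]])
    then have "partial_deriv \<rho> \<theta> j = U \<theta> ** P ** cadj (D j) + D j ** P ** cadj (U \<theta>)"
      using vector_derivative_at by (simp add: partial_deriv_def \<rho>_def)
    then show ?thesis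
      by (simp add: R_def P_def proj_outer mult_outer outer_mult_cadj \<psi>_def \<phi>_def add.commute)
  qed
  have sa: "cadj (R j) = R j" for j by (simp add: R_def cadj_add cadj_outer add.commute)
  define L where "L = (\<lambda>j. 2 *\<^sub>R R j)"
  have rR: "\<rho> \<theta> ** R j + R j ** \<rho> \<theta> = R j" for j
    by (simp add: rho R_def mm.add_left mm.add_right outer_mult ippsi bcnj bdef outer_neg)
  have sld: "is_SLD_family \<rho> \<theta> L"
    unfolding is_SLD_family_def self_adjoint_def L_def
    by (simp add: cj.scaleR sa pdrho mm.scaleR_left mm.scaleR_right scaleR_add_right[symmetric] rR)
  have trRR: "mtrace (R j ** \<rho> \<theta> ** R k) = b j * b k + ip (\<phi> j) (\<phi> k)" for j k
    by (simp add: R_def rho mm.add_left mm.add_right outer_mult mtrace_add trace_outer ip_scale ip_add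
        ippsi bcnj bdef ip_neg algebra_simps)
  have trL: "Re (mtrace (L j ** \<rho> \<theta> ** L k)) = 4 * Re (b j * b k + ip (\<phi> j) (\<phi> k))" for j k
    by (simp add: L_def mm.scaleR_left mm.scaleR_right mtrace_scaleR trRR)
  have H: "SLD_info_matrix \<rho> \<theta> = (\<lambda>j k. 4 * Re (b j * b k + ip (\<phi> j) (\<phi> k)))"
  proof -
    let ?Q = "\<lambda>H. \<exists>L. is_SLD_family \<rho> \<theta> L \<and> H = (\<lambda>j k. Re (mtrace (L j ** \<rho> \<theta> ** L k)))"
    have ex: "?Q (\<lambda>j k. Re (mtrace (L j ** \<rho> \<theta> ** L k)))" using sld by blast
    have ex2: "\<exists>H. ?Q H" using ex by blast
    from someI_ex[OF ex2] obtain L' where L': "is_SLD_family \<rho> \<theta> L'"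
      and eq: "SLD_info_matrix \<rho> \<theta> = (\<lambda>j k. Re (mtrace (L' j ** \<rho> \<theta> ** L' k)))"
      unfolding SLD_info_matrix_def by blast
    have same: "\<rho> \<theta> ** L' j + L' j ** \<rho> \<theta> = \<rho> \<theta> ** L j + L j ** \<rho> \<theta>" for j
    proof -
      have a1: "partial_deriv \<rho> \<theta> j = (1/2::real) *\<^sub>R (\<rho> \<theta> ** L' j + L' j ** \<rho> \<theta>)"
        using L' unfolding is_SLD_family_def by blast
      have a2: "partial_deriv \<rho> \<theta> j = (1/2::real) *\<^sub>R (\<rho> \<theta> ** L j + L j ** \<rho> \<theta>)"
        using sld unfolding is_SLD_family_def by blast
      have "(1/2::real) *\<^sub>R (\<rho> \<theta> ** L' j + L' j ** \<rho> \<theta>) = (1/2::real) *\<^sub>R (\<rho> \<theta> ** L j + L j ** \<rho> \<theta>)"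
        using a1 a2 by simp
      then show ?thesis by simp
    qed
    show ?thesis unfolding eq using sld_unique[OF rr same same] trL by (simp add: fun_eq_iff)
  qed
  have C: "C_Upsilon U P \<theta> = (\<lambda>j k. 4 * Re (ip (\<phi> j) (\<phi> k)))"
    by (simp add: fun_eq_iff C_Upsilon_def D_def[symmetric] P_def proj_outer mult_outer outer_mult_cadj
        trace_outer \<phi>_def)
  have cond: "mtrace (U \<theta> ** P ** cadj (partial_deriv U \<theta> l)) = b l" for l
    by (simp add: D_def[symmetric] P_def proj_outer mult_outer outer_mult_cadj trace_outer \<phi>_def \<psi>_def b_def)
  have eqv: "(4 * Re (b j * b k + ip (\<phi> j) (\<phi> k)) = 4 * Re (ip (\<phi> j) (\<phi> k)))
      \<longleftrightarrow> Im (b j) * Im (b k) = 0" for j k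
    by (simp add: reb)
  have "SLD_info_matrix \<rho> \<theta> = C_Upsilon U P \<theta> \<longleftrightarrow> (\<forall>j k. Im (b j) * Im (b k) = 0)"
    unfolding H C fun_eq_iff by (simp only: eqv)
  also have "\<dots> \<longleftrightarrow> (\<forall>l. b l = 0)"
  proof
    assume "\<forall>j k. Im (b j) * Im (b k) = 0"
    then have "Im (b l) * Im (b l) = 0" for l by blast
    then have im: "Im (b l) = 0" for l by simp
    show "\<forall>l. b l = 0"
    proof
      fix l
      show "b l = 0" using im[of l] reb[of l] complex_eq_iff[of "b l" 0] by simp
    qed
  next
    assume "\<forall>l. b l = 0"
    then show "\<forall>j k. Im (b j) * Im (b k) = 0" by simp
  qed
  finally have "SLD_info_matrix \<rho> \<theta> = C_Upsilon U P \<theta> \<longleftrightarrow> (\<forall>l. mtrace (U \<theta> ** P ** cadj (partial_deriv U \<theta> l)) = 0)"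
    by (simp add: cond)
  then show ?thesis unfolding \<rho>_def P_def .
qed

end
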